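(* Let $P_S,H_{SR},H_{SD},H_{RD},\sigma_R^2,\sigma_D^2>0$ and $\eta\in(0,1]$. Set $C_{SR}=\log(1+P_SH_{SR}/\sigma_R^2)$, $C_{SD}=\log(1+P_SH_{SD}/\sigma_D^2)$, $a=C_{SR}-C_{SD}$, $b=C_{SD}$, $c=\eta H_{SR}H_{RD}P_S/\sigma_D^2$, and assume $a>0$. Let $$f_1(\lambda)=\lambda b+(1-\lambda)\Big(b+\log\Big(1+\frac{c\lambda}{1-\lambda}\Big)\Big),\quad \lambda\in(0,1),$$ and consider the problem $\max_{\lambda\in(0,1)}\min\{\lambda C_{SR},\,f_1(\lambda)\}$. Then: (i) the equation $\lambda C_{SR}=f_1(\lambda)$ has exactly one solution $\lambda_1\in(0,1)$, namely $$\lambda_1=\frac{-\frac{1}{a}\mathcal W_{-1}\!\big(-\frac{a}{c}e^{-b-\frac{a}{c}}\big)-\frac1c}{1-\frac{1}{a}\mathcal W_{-1}\!\big(-\frac{a}{c}e^{-b-\frac{a}{c}}\big)-\frac1c};$$ (ii) $f_1$ has exactly one stationary point $\lambda_2\in(0,1)$, namely $$\lambda_2=\frac{e^{\mathcal W_0(\frac{c-1}{e})+1}-1}{e^{\mathcal W_0(\frac{c-1}{e})+1}+c-1};$$ (iii) $\lambda^*=\max\{\lambda_1,\lambda_2\}$ attains the maximum of $\min\{\lambda C_{SR},f_1(\lambda)\}$ over $\lambda\in(0,1)$.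
   Context: $\log$ is the natural logarithm. $\mathcal W_0$ and $\mathcal W_{-1}$ denote the principal and the lower real branches of the Lambert W function (the real solutions $w$ of $we^w=x$ with $w\ge -1$ and $w\le -1$, respectively, for $x\ge -1/e$, resp. $x\in[-1/e,0)$). This is the optimal time-fraction problem for the "ideal" energy-harvesting relay protocol with mutual-information accumulation at the destination: $\lambda$ is the fraction of time the source broadcasts before the relay decodes, the relay forwarding power is $\eta H_{SR}P_S\lambda/(1-\lambda)$, and the achievable rate is $\min\{\lambda C_{SR},\lambda C_{SD}+(1-\lambda)J\}$ with $J=C_{SD}+\log(1+P_RH_{RD}/\sigma_D^2)$, which equals $f_1(\lambda)$ in the second term. *)

theory Defs
  imports "HOL-Analysis.Analysis"
begin

definition LambertW0 :: "real \<Rightarrow> real" where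
  "LambertW0 x = (THE w. w \<ge> -1 \<and> w * exp w = x)"

definition LambertWm1 :: "real \<Rightarrow> real" where
  "LambertWm1 x = (THE w. w \<le> -1 \<and> w * exp w = x)"

end

theory Submission imports Defs begin

lemma wexp_incr:
  fixes w v :: real assumes "-1 \<le> w" "w < v" shows "w * exp w < v * exp v"
proof (rule DERIV_pos_imp_increasing_open[OF assms(2)])
  fix x assume "w < x" "x < v"
  then have "(1 + x) * exp x > 0" using assms by simp
  moreover have "((\<lambda>x. x * exp x) has_real_derivative (1 + x) * exp x) (at x)"
    by (auto intro!: derivative_eq_intros simp: algebra_simps)
  ultimately show "\<exists>y. ((\<lambda>x. x * exp x) has_real_derivative y) (at x) \<and> y > 0" by blast
qed (intro continuous_intros)

lemma wexp_decr:
  fixes w v :: real assumes "w < v" "v \<le> -1" shows "w * exp w > v * exp v"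
proof (rule DERIV_neg_imp_decreasing_open[OF assms(1)])
  fix x assume "w < x" "x < v"
  then have "(1 + x) * exp x < 0" using assms by (simp add: mult_neg_pos)
  moreover have "((\<lambda>x. x * exp x) has_real_derivative (1 + x) * exp x) (at x)"
    by (auto intro!: derivative_eq_intros simp: algebra_simps)
  ultimately show "\<exists>y. ((\<lambda>x. x * exp x) has_real_derivative y) (at x) \<and> y < 0" by blast
qed (intro continuous_intros)

lemma W0_eq: fixes w :: real assumes "-1 \<le> w" shows "LambertW0 (w * exp w) = w"
  unfolding LambertW0_def
proof (rule the_equality)
  fix v assume v: "-1 \<le> v \<and> v * exp v = w * exp w"
  show "v = w"
  proof (rule ccontr)
    assume "v \<noteq> w"
    then consider "v < w" | "w < v" by linarith
    then show False using wexp_incr[of v w] wexp_incr[of w v] v assms by cases auto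
  qed
qed (use assms in auto)

lemma Wm1_eq: fixes w :: real assumes "w \<le> -1" shows "LambertWm1 (w * exp w) = w"
  unfolding LambertWm1_def
proof (rule the_equality)
  fix v assume v: "v \<le> -1 \<and> v * exp v = w * exp w"
  show "v = w"
  proof (rule ccontr)
    assume "v \<noteq> w"
    then consider "v < w" | "w < v" by linarith
    then show False using wexp_decr[of v w] wexp_decr[of w v] v assms by cases auto
  qed
qed (use assms in auto)


lemma f1_deriv:
  fixes b c l :: real assumes "c > 0" "0 < l" "l < 1"
  shows "((\<lambda>l. l * b + (1 - l) * (b + ln (1 + c * l / (1 - l)))) has_real_derivative
     (1 - ln (1 + c * l / (1 - l)) + (c - 1) / (1 + c * l / (1 - l)))) (at l)"
proof -
  have v: "1 + c * l / (1 - l) > 0" using assms by (simp add: add_pos_nonneg)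
  have vv: "1 + c * l / (1 - l) = (1 - l + c * l) / (1 - l)" using assms by (simp add: field_simps)
  have p: "1 - l + c * l > 0" using assms by (simp add: add_pos_nonneg)
  have e1: "(1 - l) * ((c * (1 - l) + c * l) / (1 - l)^2 / (1 + c * l / (1 - l))) = c / (1 - l + c * l)"
  proof -
    have "c * (1 - l) + c * l = c" by (simp add: algebra_simps)
    moreover have "(1 - l) * (c / (1 - l)^2 / ((1 - l + c * l) / (1 - l))) = c / (1 - l + c * l)"
      using assms p by (simp add: power2_eq_square)
    ultimately show ?thesis unfolding vv by simp
  qed
  have e2: "1 + (c - 1) / (1 + c * l / (1 - l)) = c / (1 - l + c * l)"
    unfolding vv using assms p by (simp add: field_simps)
  have eq: "1 - ln (1 + c * l / (1 - l)) + (c - 1) / (1 + c * l / (1 - l)) =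
     b + (- b - ln (1 + c * l / (1 - l))) + (1 - l) * ((c * (1 - l) + c * l) / (1 - l)^2 / (1 + c * l / (1 - l)))"
    unfolding e1 using e2 by linarith
  have d1: "((\<lambda>l. 1 + c * l / (1 - l)) has_real_derivative c / (1 - l)^2) (at l)"
    using assms by (auto intro!: derivative_eq_intros simp: field_simps power2_eq_square)
  have d2: "((\<lambda>l. ln (1 + c * l / (1 - l))) has_real_derivative 1 / (1 + c * l / (1 - l)) * (c / (1 - l)^2)) (at l)"
    by (rule DERIV_chain2[OF DERIV_ln_divide[OF v] d1])
  have d0: "((\<lambda>x. 1 - x) has_real_derivative -1) (at l)" by (auto intro!: derivative_eq_intros)
  have e3: "c * (1 - l) + c * l = c" by (simp add: algebra_simps)
  show ?thesis
    apply (rule DERIV_cong)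
     apply (rule DERIV_add)
      apply (rule DERIV_mult DERIV_ident DERIV_const)+
      apply (rule d0)
     apply (rule DERIV_add[OF DERIV_const d2])
    using eq e3 by (simp add: algebra_simps)
qed

lemma phi_decr:
  fixes c v w :: real assumes "c > 0" "1 \<le> v" "v < w"
  shows "1 - ln w + (c - 1) / w < 1 - ln v + (c - 1) / v"
proof (rule DERIV_neg_imp_decreasing_open[OF assms(3), where f = "\<lambda>v. 1 - ln v + (c - 1) / v"])
  fix x assume x: "v < x" "x < w"
  then have "x > 0" "x > 1" using assms by auto
  have "((\<lambda>v. 1 - ln v + (c - 1) / v) has_real_derivative (- (x + c - 1) / x^2)) (at x)"
    using \<open>x > 0\<close> by (auto intro!: derivative_eq_intros simp: field_simps power2_eq_square)
  moreover have "- (x + c - 1) / x^2 < 0" using \<open>x > 1\<close> assms by (simp add: divide_neg_pos)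
  ultimately show "\<exists>y. ((\<lambda>v. 1 - ln v + (c - 1) / v) has_real_derivative y) (at x) \<and> y < 0" by blast
next
  show "continuous_on {v..w} (\<lambda>v. 1 - ln v + (c - 1) / v)" using assms
    by (intro continuous_intros) auto
qed


lemma h_big:
  fixes a b c u :: real
  assumes "a > 0" "b > 0" "c > 0" "1 < u" "a * (u - 1) / c - b - ln u = 0"
  shows "a * u / c > 1"
proof (rule ccontr)
  assume "\<not> a * u / c > 1"
  then have "a * u \<le> c" using assms by (simp add: field_simps)
  have "ln (1 / u) \<le> 1 / u - 1" using assms by (intro ln_le_minus_one) auto
  then have l: "ln u \<ge> 1 - 1 / u" using assms by (simp add: ln_div)
  have "(u - 1) * (a * u) \<le> (u - 1) * c" using assms \<open>a * u \<le> c\<close> by (intro mult_left_mono) auto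
  then have "(u - 1) * a / c \<le> (u - 1) / u"
    using assms(1-4) by (simp add: field_simps)
  moreover have "(u - 1) / u = 1 - 1 / u" using assms by (simp add: field_simps)
  moreover have "a * (u - 1) / c = (u - 1) * a / c" by simp
  ultimately have "a * (u - 1) / c \<le> ln u" using l by linarith
  then show False using assms by linarith
qed

lemma h_after:
  fixes a b c u1 u :: real
  assumes "a > 0" "c > 0" "0 < u1" "a * (u1 - 1) / c - b - ln u1 = 0" "a * u1 / c > 1" "u1 \<le> u"
  shows "a * (u - 1) / c - b - ln u \<ge> 0"
proof -
  have l: "ln u - ln u1 \<le> (u - u1) / u1" using assms by (intro ln_diff_le) auto
  have "1 / u1 \<le> a / c" using assms by (simp add: field_simps)
  then have "(u - u1) / u1 \<le> (u - u1) * (a / c)" using assms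
    by (metis diff_ge_0_iff_ge mult_left_mono times_divide_eq_right mult_1_right)
  moreover have "a * (u - 1) / c = a * (u1 - 1) / c + (u - u1) * (a / c)" using assms(2) by (simp add: field_simps)
  ultimately show ?thesis using l assms(4) by linarith
qed

lemma h_exists:
  fixes a b c :: real
  assumes "a > 0" "b > 0" "c > 0"
  shows "\<exists>u>1. a * (u - 1) / c - b - ln u = 0"
proof -
  define k where "k = 2 * c / a"
  define A where "A = a / c + b + \<bar>ln k\<bar> + 1 + 1 / k"
  have k: "k > 0" using assms by (simp add: k_def)
  have "a / c > 0" "1 / k > 0" using assms k by auto
  then have A: "A > 0" "A \<ge> 1 / k" using assms unfolding A_def
    by (smt (verit) abs_ge_zero)+
  define M where "M = k * A"
  have M1: "M \<ge> 1" using A k unfolding M_def by (simp add: field_simps)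
  have lnM: "ln M = ln k + ln A" using k A by (simp add: M_def ln_mult)
  have "ln A \<le> A - 1" using A by (intro ln_le_minus_one) auto
  have aM: "a * M / c = 2 * A" using assms by (simp add: M_def k_def field_simps)
  have "a * (M - 1) / c - b - ln M = 2 * A - a / c - b - ln M" using aM assms by (simp add: field_simps)
  also have "\<dots> \<ge> A - a / c - b - ln k + 1" using lnM \<open>ln A \<le> A - 1\<close> by linarith
  finally have X: "a * (M - 1) / c - b - ln M \<ge> A - a / c - b - ln k + 1" .
  have "A - a / c - b - ln k + 1 > 0" unfolding A_def using \<open>1 / k > 0\<close> abs_ge_self[of "ln k"] by linarith
  with X have hM: "a * (M - 1) / c - b - ln M > 0" by linarith
  have "\<exists>u. 1 \<le> u \<and> u \<le> M \<and> a * (u - 1) / c - b - ln u = 0"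
    by (rule IVT'[where f = "\<lambda>u. a * (u - 1) / c - b - ln u"]) (use assms hM M1 in \<open>auto intro!: continuous_intros\<close>)
  then obtain u where u: "1 \<le> u" "a * (u - 1) / c - b - ln u = 0" by blast
  then have "u \<noteq> 1" using assms by auto
  then have "u > 1" using u by linarith
  then show ?thesis using u by blast
qed

lemma h_lambert:
  fixes a b c u :: real
  assumes "a > 0" "c > 0" "0 < u" "a * (u - 1) / c - b - ln u = 0"
  shows "(- a * u / c) * exp (- a * u / c) = - (a / c) * exp (- b - a / c)"
proof -
  have "ln u = a * u / c - a / c - b" using assms by (simp add: field_simps)
  then have "u = exp (a * u / c - a / c - b)" using assms by (metis exp_ln)
  then have "u * exp (- a * u / c) = exp (a * u / c - a / c - b) * exp (- a * u / c)" by simp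
  also have "\<dots> = exp (- b - a / c)" by (simp add: exp_add[symmetric])
  finally have "u * exp (- a * u / c) = exp (- b - a / c)" .
  then show ?thesis by (metis minus_mult_left mult.assoc times_divide_eq_left mult.commute)
qed


lemma phi_exists:
  fixes c :: real assumes "c > 0"
  shows "\<exists>v>1. 1 - ln v + (c - 1) / v = 0"
proof -
  define E where "E = exp (c + 1)"
  have E: "E \<ge> 1" using assms by (simp add: E_def)
  have "c - 1 < c * E" using E assms by (smt (verit) mult_le_cancel_left1)
  then have "(c - 1) / E < c" using E by (simp add: divide_less_eq)
  then have "1 - ln E + (c - 1) / E \<le> 0" by (simp add: E_def)
  have "\<exists>v. 1 \<le> v \<and> v \<le> E \<and> 1 - ln v + (c - 1) / v = 0"
    by (rule IVT2'[where f = "\<lambda>v. 1 - ln v + (c - 1) / v"])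
       (use assms E \<open>1 - ln E + (c - 1) / E \<le> 0\<close> in \<open>auto intro!: continuous_intros\<close>)
  then obtain v where v: "1 \<le> v" "1 - ln v + (c - 1) / v = 0" by blast
  then have "v \<noteq> 1" using assms by auto
  then have "v > 1" using v by linarith
  then show ?thesis using v by blast
qed

lemma vpar:
  fixes c l :: real assumes "c > 0" "0 < l" "l < 1"
  shows "1 + c * l / (1 - l) > 1" "l = ((1 + c * l / (1 - l)) - 1) / ((1 + c * l / (1 - l)) - 1 + c)"
proof -
  show "1 + c * l / (1 - l) > 1" using assms by simp
  have "(1 + c * l / (1 - l)) - 1 + c = c / (1 - l)" using assms by (simp add: field_simps)
  then show "l = ((1 + c * l / (1 - l)) - 1) / ((1 + c * l / (1 - l)) - 1 + c)"
    using assms by (simp add: field_simps)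
qed

lemma lpar:
  fixes c u :: real assumes "c > 0" "u > 1"
  shows "0 < (u - 1) / (u - 1 + c)" "(u - 1) / (u - 1 + c) < 1"
    "1 + c * ((u - 1) / (u - 1 + c)) / (1 - (u - 1) / (u - 1 + c)) = u"
proof -
  show "0 < (u - 1) / (u - 1 + c)" using assms by simp
  show "(u - 1) / (u - 1 + c) < 1" using assms by simp
  have "1 - (u - 1) / (u - 1 + c) = c / (u - 1 + c)" using assms by (simp add: field_simps)
  moreover have "u - 1 + c > 0" using assms by simp
  moreover have "c * ((u - 1) / (u - 1 + c)) / (c / (u - 1 + c)) = u - 1"
    using assms \<open>u - 1 + c > 0\<close> by simp
  ultimately show "1 + c * ((u - 1) / (u - 1 + c)) / (1 - (u - 1) / (u - 1 + c)) = u"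
    by simp
qed

lemma vmono:
  fixes c l l' :: real assumes "c > 0" "0 < l" "l < l'" "l' < 1"
  shows "1 + c * l / (1 - l) < 1 + c * l' / (1 - l')"
proof -
  have "l / (1 - l) < l' / (1 - l')" using assms by (simp add: field_simps)
  then show ?thesis using assms by (simp add: field_simps)
qed


theorem theorem1:
  fixes PS HSR HSD HRD sR2 sD2 \<eta> :: real
    and CSR CSD a b c lam1 lam2 :: real
    and f1 :: "real \<Rightarrow> real"
  assumes pos: "PS > 0" "HSR > 0" "HSD > 0" "HRD > 0" "sR2 > 0" "sD2 > 0"
    and eta: "0 < \<eta>" "\<eta> \<le> 1"
    and CSR_def: "CSR = ln (1 + PS * HSR / sR2)"
    and CSD_def: "CSD = ln (1 + PS * HSD / sD2)"
    and a_def: "a = CSR - CSD"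
    and b_def: "b = CSD"
    and c_def: "c = \<eta> * HSR * HRD * PS / sD2"
    and a_pos: "a > 0"
    and f1_def: "f1 = (\<lambda>l. l * b + (1 - l) * (b + ln (1 + c * l / (1 - l))))"
    and l1_def: "lam1 = (- (1/a) * LambertWm1 (- (a/c) * exp (- b - a/c)) - 1/c)
                     / (1 - (1/a) * LambertWm1 (- (a/c) * exp (- b - a/c)) - 1/c)"
    and l2_def: "lam2 = (exp (LambertW0 ((c - 1) / exp 1) + 1) - 1)
                     / (exp (LambertW0 ((c - 1) / exp 1) + 1) + c - 1)"
  shows "(lam1 \<in> {0<..<1} \<and> lam1 * CSR = f1 lam1 \<and>
           (\<forall>l\<in>{0<..<1}. l * CSR = f1 l \<longrightarrow> l = lam1))
       \<and> (lam2 \<in> {0<..<1} \<and> (f1 has_real_derivative 0) (at lam2) \<and>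
           (\<forall>l\<in>{0<..<1}. (f1 has_real_derivative 0) (at l) \<longrightarrow> l = lam2))
       \<and> (max lam1 lam2 \<in> {0<..<1} \<and>
           (\<forall>l\<in>{0<..<1}. min (l * CSR) (f1 l)
              \<le> min (max lam1 lam2 * CSR) (f1 (max lam1 lam2))))"
proof -
  have "PS * HSD / sD2 > 0" using pos by simp
  then have b: "b > 0" unfolding b_def CSD_def by (intro ln_gt_zero) simp
  have c: "c > 0" using pos eta unfolding c_def by simp
  have CSR: "CSR = a + b" using a_def b_def by simp
  have CSRpos: "CSR > 0" using a_pos b CSR by simp
  define v where "v = (\<lambda>l::real. 1 + c * l / (1 - l))"
  define h where "h = (\<lambda>u::real. a * (u - 1) / c - b - ln u)"
  define phi where "phi = (\<lambda>v::real. 1 - ln v + (c - 1) / v)"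
  define z where "z = - (a / c) * exp (- b - a / c)"
  have f1v: "l * CSR - f1 l = (1 - l) * h (v l)" if l: "0 < l" "l < 1" for l
  proof -
    have "a * (v l - 1) / c = a * l / (1 - l)" using c l by (simp add: v_def)
    then have "(1 - l) * h (v l) = (1 - l) * (a * l / (1 - l)) - (1 - l) * b - (1 - l) * ln (v l)"
      by (simp add: h_def right_diff_distrib)
    moreover have "(1 - l) * (a * l / (1 - l)) = a * l" using l by simp
    ultimately have "(1 - l) * h (v l) = a * l - (1 - l) * b - (1 - l) * ln (v l)" by simp
    then show ?thesis by (simp add: f1_def CSR v_def algebra_simps)
  qed
  have vgt: "v l > 1" if "0 < l" "l < 1" for l using vpar(1)[OF c that] by (simp add: v_def)
  have vinv: "l = (v l - 1) / (v l - 1 + c)" if "0 < l" "l < 1" for l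
    using vpar(2)[OF c that] by (simp add: v_def)
  have lv: "0 < (u - 1) / (u - 1 + c)" "(u - 1) / (u - 1 + c) < 1" "v ((u - 1) / (u - 1 + c)) = u"
    if "u > 1" for u using lpar[OF c that] by (simp_all add: v_def)
  have lamb: "LambertWm1 z = - a * u / c" if "u > 1" "h u = 0" for u
  proof -
    have "a * u / c > 1" using h_big[OF a_pos b c that(1)] that(2) unfolding h_def by simp
    then have w: "- a * u / c \<le> -1" by simp
    have eqz: "(- a * u / c) * exp (- a * u / c) = z"
      using h_lambert[OF a_pos c _ ] that unfolding h_def z_def by simp
    show ?thesis using Wm1_eq[OF w] unfolding eqz .
  qed
  obtain u1 where u1: "u1 > 1" "h u1 = 0" using h_exists[OF a_pos b c] unfolding h_def by blast
  have u1big: "a * u1 / c > 1" using h_big[OF a_pos b c u1(1)] u1(2) unfolding h_def by simp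
  have W: "LambertWm1 z = - a * u1 / c" using lamb[OF u1] .
  have "- (1/a) * LambertWm1 z = u1 / c" unfolding W using a_pos by simp
  then have "lam1 = (u1 / c - 1 / c) / (1 + u1 / c - 1 / c)" using l1_def unfolding z_def by simp
  moreover have "u1 / c - 1 / c = (u1 - 1) / c" by (simp add: diff_divide_distrib)
  moreover have "1 + u1 / c - 1 / c = (u1 - 1 + c) / c" using c by (simp add: field_simps)
  ultimately have "lam1 = ((u1 - 1) / c) / ((u1 - 1 + c) / c)" by simp
  then have lam1: "lam1 = (u1 - 1) / (u1 - 1 + c)" using c by simp
  have lam1_in: "0 < lam1" "lam1 < 1" and vl1: "v lam1 = u1" using lv[OF u1(1)] lam1 by auto
  have eq1: "lam1 * CSR = f1 lam1" using f1v[OF lam1_in] u1(2) vl1 by simp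
  have uniq1: "l = lam1" if l: "0 < l" "l < 1" "l * CSR = f1 l" for l
  proof -
    have "h (v l) = 0" using f1v[OF l(1,2)] l by simp
    then have "LambertWm1 z = - a * v l / c" using lamb vgt[OF l(1,2)] by blast
    then have "v l = u1" using W a_pos c by (simp add: field_simps)
    then show ?thesis using vinv[OF l(1,2)] lam1 by simp
  qed
  obtain v2 where v2: "v2 > 1" "phi v2 = 0" using phi_exists[OF c] unfolding phi_def by blast
  define y2 where "y2 = ln v2 - 1"
  have "y2 * v2 = c - 1" using v2 unfolding phi_def y2_def by (simp add: field_simps)
  moreover have "exp y2 = v2 / exp 1" using v2 unfolding y2_def by (simp add: exp_diff)
  ultimately have eqy: "y2 * exp y2 = (c - 1) / exp 1" by simp
  have ym: "y2 \<ge> -1" using v2 unfolding y2_def by simp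
  have W0: "LambertW0 ((c - 1) / exp 1) = y2" using W0_eq[OF ym] unfolding eqy .
  have "exp (LambertW0 ((c - 1) / exp 1) + 1) = v2" unfolding W0 y2_def using v2 by simp
  then have lam2: "lam2 = (v2 - 1) / (v2 - 1 + c)" unfolding l2_def by (simp add: algebra_simps)
  have lam2_in: "0 < lam2" "lam2 < 1" and vl2: "v lam2 = v2" using lv[OF v2(1)] lam2 by auto
  have fd: "(f1 has_real_derivative phi (v l)) (at l)" if "0 < l" "l < 1" for l
    unfolding f1_def phi_def v_def by (rule f1_deriv[OF c that])
  have d2: "(f1 has_real_derivative 0) (at lam2)" using fd[OF lam2_in] vl2 v2 by simp
  have uniq2: "l = lam2" if l: "0 < l" "l < 1" "(f1 has_real_derivative 0) (at l)" for l
  proof -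
    have "phi (v l) = 0" using DERIV_unique[OF fd[OF l(1,2)] l(3)] .
    have "v l = v2"
    proof (rule ccontr)
      assume "v l \<noteq> v2"
      then consider "v l < v2" | "v2 < v l" by linarith
      then show False
      proof cases
        case 1 then show ?thesis using phi_decr[OF c _ 1] vgt[OF l(1,2)] \<open>phi (v l) = 0\<close> v2
          unfolding phi_def by simp
      next
        case 2 then show ?thesis using phi_decr[OF c _ 2] \<open>phi (v l) = 0\<close> v2
          unfolding phi_def by simp
      qed
    qed
    then show ?thesis using vinv[OF l(1,2)] lam2 by simp
  qed
  have dpos: "phi (v l) \<ge> 0" if "0 < l" "l < lam2" for l
  proof -
    have "v l < v2" using vmono[OF c that(1,2) lam2_in(2)] vl2 by (simp add: v_def)
    have "1 \<le> v l" using vgt[of l] that lam2_in by linarith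
    have "phi v2 < phi (v l)" unfolding phi_def by (rule phi_decr[OF c \<open>1 \<le> v l\<close> \<open>v l < v2\<close>])
    then show ?thesis using v2 by linarith
  qed
  have dneg: "phi (v l) \<le> 0" if "lam2 < l" "l < 1" for l
  proof -
    have "v2 < v l" using vmono[OF c lam2_in(1) that] vl2 by (simp add: v_def)
    have "1 \<le> v2" using v2 by linarith
    have "phi (v l) < phi v2" unfolding phi_def by (rule phi_decr[OF c \<open>1 \<le> v2\<close> \<open>v2 < v l\<close>])
    then show ?thesis using v2 by linarith
  qed
  have cont: "continuous_on {x..y} f1" if "0 < x" "y < 1" for x y
    using that by (intro continuous_at_imp_continuous_on ballI DERIV_isCont[OF fd]) auto
  have inc: "f1 x \<le> f1 y" if "0 < x" "x \<le> y" "y \<le> lam2" for x y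
  proof (rule DERIV_nonneg_imp_increasing_open[OF that(2)])
    fix t assume "x < t" "t < y"
    then have t: "0 < t" "t < 1" "t < lam2" using that lam2_in by linarith+
    show "\<exists>d. (f1 has_real_derivative d) (at t) \<and> d \<ge> 0" using fd[OF t(1,2)] dpos[OF t(1,3)] by blast
  next
    show "continuous_on {x..y} f1" by (rule cont) (use that lam2_in in linarith)+
  qed
  have dec: "f1 y \<le> f1 x" if "lam2 \<le> x" "x \<le> y" "y < 1" for x y
  proof (rule DERIV_nonpos_imp_decreasing_open[OF that(2)])
    fix t assume "x < t" "t < y"
    then have t: "0 < t" "t < 1" "lam2 < t" using that lam2_in by linarith+
    show "\<exists>d. (f1 has_real_derivative d) (at t) \<and> d \<le> 0" using fd[OF t(1,2)] dneg[OF t(3,2)] by blast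
  next
    show "continuous_on {x..y} f1" by (rule cont) (use that lam2_in in linarith)+
  qed
  have fmax: "f1 l \<le> f1 lam2" if "0 < l" "l < 1" for l
  proof (cases "l \<le> lam2")
    case True then show ?thesis using inc that by blast
  next
    case False then show ?thesis using dec[of lam2 l] that by linarith
  qed
  have iii: "min (l * CSR) (f1 l) \<le> min (max lam1 lam2 * CSR) (f1 (max lam1 lam2))"
    if l: "0 < l" "l < 1" for l
  proof (cases "lam2 \<le> lam1")
    case True
    then have m: "max lam1 lam2 = lam1" by simp
    show ?thesis
    proof (cases "l \<le> lam1")
      case True
      then have "l * CSR \<le> lam1 * CSR" using CSRpos by simp
      then show ?thesis unfolding m eq1 by simp
    next
      case False
      then have "f1 l \<le> f1 lam1" using dec[of lam1 l] \<open>lam2 \<le> lam1\<close> l by simp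
      then show ?thesis unfolding m eq1 by simp
    qed
  next
    case False
    then have m: "max lam1 lam2 = lam2" by simp
    have "lam1 < lam2" using False by linarith
    have "v lam1 \<le> v lam2" using vmono[OF c lam1_in(1) \<open>lam1 < lam2\<close> lam2_in(2)] by (simp add: v_def)
    then have "h (v lam2) \<ge> 0" using h_after[OF a_pos c _ _ u1big, of b "v lam2"] u1 vl1
      unfolding h_def by simp
    then have "(1 - lam2) * h (v lam2) \<ge> 0" using lam2_in by simp
    then have "f1 lam2 \<le> lam2 * CSR" using f1v[OF lam2_in] by linarith
    then show ?thesis unfolding m using fmax[OF l] by simp
  qed
  have mx: "max lam1 lam2 \<in> {0<..<1}" using lam1_in lam2_in by (simp add: max_def)
  show ?thesis
  proof (intro conjI ballI impI)
    show "lam1 \<in> {0<..<1}" using lam1_in by simp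
    show "lam2 \<in> {0<..<1}" using lam2_in by simp
  qed (use eq1 uniq1 d2 uniq2 iii mx in auto)
qed

end
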